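(* Let $z_1,\dots,z_n$ be distinct points of the unit circle and $\xi_1,\dots,\xi_m$ distinct points of $\mathbb{C}\setminus\{0\}$, distinct from the $z_j$. The following are equivalent: (1) the set $\{\xi_1,\dots,\xi_m\}$ is invariant under $\xi\mapsto1/\bar\xi$, and $\boldsymbol z,\boldsymbol\xi$ satisfy the stationary relations $$-\sum_{j=1}^n\frac{2}{\xi_k-z_j}+\sum_{l\neq k}\frac{4}{\xi_k-\xi_l}+\frac{n-2m+2}{\xi_k}=0,\qquad k=1,\dots,m;$$ (2) there exists a quadratic differential $Q(z)dz^2\in\mathcal{QD}_{m,n}(\boldsymbol z)$ whose poles (other than $0,\infty$) are $\xi_1,\dots,\xi_m$ and whose zeros (other than $0,\infty$) are $z_1,\dots,z_n$.
   Context: $\mathcal{QD}_{m,n}(\boldsymbol z)$ denotes the set of meromorphic quadratic differentials $Q(z)dz^2$ on the Riemann sphere such that: (1) $Q$ is involution symmetric, $\overline{Q(z^* )}\,\overline{(dz^* )^2}=Q(z)dz^2$ with $z^*=1/\bar z$, i.e. $Q(z)=z^{-4}\,\overline{Q(1/\bar z)}$; (2) $z_1,\dots,z_n$ are zeros of order exactly $2$; (3) $\xi_1,\dots,\xi_m$ are distinct finite nonzero poles of order $4$ at which the residue of $\sqrt{Q(z)}\,dz$ vanishes (this residue is well defined up to sign since the pole has even order); (4) $Q$ has a pole of order $n+2-2m$ at $0$ and at $\infty$ (a negative order meaning a zero of the opposite order); and $Q$ has no other zeros or poles. *)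

theory Defs
  imports "HOL-Complex_Analysis.Complex_Analysis"
begin

text \<open>Residue of a (local branch of) sqrt(Q) dz at a point p vanishes: some holomorphic
  square root of Q on a punctured disc around p has residue 0 at p
  (the two branches differ by a sign, so this is independent of the branch).\<close>
definition sqrt_residue_vanishes :: "(complex \<Rightarrow> complex) \<Rightarrow> complex \<Rightarrow> bool" where
  "sqrt_residue_vanishes Q p \<longleftrightarrow>
     (\<exists>f r. r > 0 \<and> f holomorphic_on (ball p r - {p}) \<and>
            (\<forall>w \<in> ball p r - {p}. (f w)^2 = Q w) \<and> residue f p = 0)"

text \<open>Q(z) dz^2 in the chart w = 1/z at infinity: Q(1/w) w^(-4) dw^2.\<close>
definition at_infinity_chart :: "(complex \<Rightarrow> complex) \<Rightarrow> complex \<Rightarrow> complex" where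
  "at_infinity_chart Q w = Q (1 / w) / w ^ 4"

definition QD_with :: "nat \<Rightarrow> nat \<Rightarrow> (nat \<Rightarrow> complex) \<Rightarrow> (nat \<Rightarrow> complex)
                        \<Rightarrow> (complex \<Rightarrow> complex) \<Rightarrow> bool" where
  "QD_with m n z xi Q \<longleftrightarrow>
     Q meromorphic_on UNIV \<and>
     at_infinity_chart Q meromorphic_on {0} \<and>
     \<not> (\<forall>\<^sub>F w in cosparse UNIV. Q w = 0) \<and>
     (\<forall>\<^sub>F w in cosparse UNIV. Q w = cnj (Q (1 / cnj w)) / w ^ 4) \<and>
     (\<forall>j<n. zorder Q (z j) = 2) \<and>
     (\<forall>k<m. xi k \<noteq> 0 \<and> zorder Q (xi k) = -4 \<and> sqrt_residue_vanishes Q (xi k)) \<and>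
     zorder Q 0 = - (int n + 2 - 2 * int m) \<and>
     zorder (at_infinity_chart Q) 0 = - (int n + 2 - 2 * int m) \<and>
     (\<forall>w. w \<noteq> 0 \<and> w \<notin> z ` {..<n} \<and> w \<notin> xi ` {..<m} \<longrightarrow> zorder Q w = 0)"

definition QD :: "nat \<Rightarrow> nat \<Rightarrow> (nat \<Rightarrow> complex) \<Rightarrow> (complex \<Rightarrow> complex) set" where
  "QD m n z = {Q. \<exists>xi. inj_on xi {..<m} \<and> QD_with m n z xi Q}"

end

theory Submission
  imports Defs
begin

definition ratf :: "complex set \<Rightarrow> (complex \<Rightarrow> int) \<Rightarrow> complex \<Rightarrow> complex" where
  "ratf S ord w = (\<Prod>p\<in>S. (w - p) powi ord p)"

lemma ratf_nonzero: "finite S \<Longrightarrow> w \<notin> S \<Longrightarrow> ratf S ord w \<noteq> 0"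
  unfolding ratf_def by (auto simp: power_int_not_zero)

lemma ratf_holo: "finite S \<Longrightarrow> T \<inter> S = {} \<Longrightarrow> ratf S ord holomorphic_on T"
  unfolding ratf_def by (intro holomorphic_intros) auto

lemma ratf_mero: "ratf S ord meromorphic_on A"
  unfolding ratf_def by (intro meromorphic_intros)

lemma ratf_remove: "finite S \<Longrightarrow> p \<in> S \<Longrightarrow> ratf S ord w = ratf (S - {p}) ord w * (w - p) powi ord p"
  unfolding ratf_def by (simp add: prod.remove mult.commute)

lemma ratf_zorder:
  assumes "finite S"
  shows "zorder (ratf S ord) w0 = (if w0 \<in> S then ord w0 else 0)"
proof (rule zorder_eqI)
  show "open (- (S - {w0}))" by (rule open_Compl, rule finite_imp_closed) (use assms in auto)
  show "w0 \<in> - (S - {w0})" by auto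
  show "ratf (S - {w0}) ord holomorphic_on - (S - {w0})" using assms by (intro ratf_holo) auto
  show "ratf (S - {w0}) ord w0 \<noteq> 0" using assms by (intro ratf_nonzero) auto
  fix w assume "w \<in> - (S - {w0})" "w \<noteq> w0"
  show "ratf S ord w = ratf (S - {w0}) ord w * (w - w0) powi (if w0 \<in> S then ord w0 else 0)"
    using assms by (cases "w0 \<in> S") (auto simp: ratf_remove)
qed

lemma ratf_empty: "ratf {} ord = (\<lambda>_. 1)"
  by (auto simp: ratf_def)

lemma ratf_insert: "finite S \<Longrightarrow> a \<notin> S \<Longrightarrow> ratf (insert a S) ord = (\<lambda>w. (w - a) powi ord a * ratf S ord w)"
  by (auto simp: ratf_def)

lemma ratf_deriv:
  assumes "finite S" "w \<notin> S"
  shows "(ratf S ord has_field_derivative ratf S ord w * (\<Sum>q\<in>S. of_int (ord q) / (w - q))) (at w)"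
  using assms
proof (induction S rule: finite_induct)
  case empty
  then show ?case by (simp add: ratf_empty)
next
  case (insert a S)
  have wa: "w - a \<noteq> 0" using insert by auto
  have "((\<lambda>w. (w - a) powi ord a * ratf S ord w) has_field_derivative
     (of_int (ord a) * (w - a) powi (ord a - 1) * 1) * ratf S ord w + (w - a) powi ord a * (ratf S ord w * (\<Sum>q\<in>S. of_int (ord q) / (w - q)))) (at w)"
    using insert wa by (intro DERIV_mult DERIV_power_int derivative_eq_intros) auto
  moreover have "(of_int (ord a) * (w - a) powi (ord a - 1) * 1) * ratf S ord w + (w - a) powi ord a * (ratf S ord w * (\<Sum>q\<in>S. of_int (ord q) / (w - q)))
     = ((w - a) powi ord a * ratf S ord w) * (\<Sum>q\<in>insert a S. of_int (ord q) / (w - q))"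
    using insert wa by (simp add: power_int_diff field_simps sum_distrib_left)
  ultimately show ?case using insert by (simp add: ratf_insert)
qed

lemma prod_power_int: "finite S \<Longrightarrow> (x::complex) \<noteq> 0 \<Longrightarrow> (\<Prod>p\<in>S. x powi f p) = x powi (\<Sum>p\<in>S. f p)"
  by (induction S rule: finite_induct) (auto simp: power_int_add)

lemma ratf_chart:
  assumes "finite S" "w \<noteq> 0"
  shows "at_infinity_chart (ratf S ord) w = (\<Prod>p\<in>S. (1 - p*w) powi ord p) * w powi (-(\<Sum>p\<in>S. ord p) - 4)"
proof -
  have "ratf S ord (1/w) = (\<Prod>p\<in>S. (1 - p*w) powi ord p * (1/w) powi ord p)"
    unfolding ratf_def
  proof (rule prod.cong)
    fix p assume "p \<in> S"
    have e: "1/w - p = (1 - p*w) * (1/w)" using assms by (simp add: field_simps)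
    show "(1 / w - p) powi ord p = (1 - p * w) powi ord p * (1 / w) powi ord p"
      unfolding e by (rule power_int_mult_distrib)
  qed auto
  also have "\<dots> = (\<Prod>p\<in>S. (1 - p*w) powi ord p) * (1/w) powi (\<Sum>p\<in>S. ord p)"
    using assms by (simp add: prod.distrib prod_power_int)
  finally have "ratf S ord (1/w) = (\<Prod>p\<in>S. (1 - p*w) powi ord p) * (1/w) powi (\<Sum>p\<in>S. ord p)" .
  moreover have "(1/w) powi (\<Sum>p\<in>S. ord p) / w ^ 4 = w powi (-(\<Sum>p\<in>S. ord p) - 4)"
  proof -
    have "(1/w) powi (\<Sum>p\<in>S. ord p) = 1 / w powi (\<Sum>p\<in>S. ord p)" by (rule power_int_one_over)
    also have "\<dots> = w powi (-(\<Sum>p\<in>S. ord p))" by (rule power_int_minus_divide[symmetric])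
    finally have e1: "(1/w) powi (\<Sum>p\<in>S. ord p) / w ^ 4 = w powi (-(\<Sum>p\<in>S. ord p)) / w powi 4" by simp
    have "w powi (-(\<Sum>p\<in>S. ord p) - 4) = w powi (-(\<Sum>p\<in>S. ord p)) / w powi 4"
      by (rule power_int_diff) (use assms in auto)
    thus ?thesis using e1 by simp
  qed
  ultimately show ?thesis unfolding at_infinity_chart_def by (metis times_divide_eq_right)
qed

lemma ratf_chart_zorder:
  assumes "finite S"
  shows "zorder (at_infinity_chart (ratf S ord)) 0 = -(\<Sum>p\<in>S. ord p) - 4"
proof -
  define U where "U = {w. (\<Prod>p\<in>S. (1 - p*w)) \<noteq> 0}"
  have U: "open U" unfolding U_def by (intro open_Collect_neq continuous_intros)
  have nz: "1 - p * w \<noteq> 0" if "w \<in> U" "p \<in> S" for w p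
    using that assms by (auto simp: U_def)
  show ?thesis
  proof (rule zorder_eqI[OF U])
    show "0 \<in> U" using assms by (auto simp: U_def)
    show "(\<lambda>w. \<Prod>p\<in>S. (1 - p*w) powi ord p) holomorphic_on U"
      using nz by (intro holomorphic_intros) auto
    show "(\<Prod>p\<in>S. (1 - p*0) powi ord p) \<noteq> 0" by simp
    fix w assume "w \<in> U" "w \<noteq> 0"
    thus "at_infinity_chart (ratf S ord) w = (\<Prod>p\<in>S. (1 - p*w) powi ord p) * (w - 0) powi (-(\<Sum>p\<in>S. ord p) - 4)"
      using ratf_chart[OF assms] by simp
  qed
qed

lemma ball_sqrt:
  assumes "h holomorphic_on ball p r" "\<And>w. w \<in> ball p r \<Longrightarrow> h w \<noteq> 0"
  obtains s where "s holomorphic_on ball p r" "\<And>w. w \<in> ball p r \<Longrightarrow> s w ^ 2 = h w"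
proof -
  obtain g where g: "g holomorphic_on ball p r" "\<And>z. z \<in> ball p r \<Longrightarrow> h z = exp (g z)"
    using contractible_imp_holomorphic_log[of h "ball p r"] convex_imp_contractible[of "ball p r"] assms by auto
  show ?thesis
  proof (rule that[of "\<lambda>w. exp (g w / 2)"])
    show "(\<lambda>w. exp (g w / 2)) holomorphic_on ball p r" by (intro holomorphic_intros g(1)) auto
    fix w assume "w \<in> ball p r"
    thus "exp (g w / 2) ^ 2 = h w" using g(2)[of w] by (simp add: exp_double[symmetric] flip: exp_of_nat_mult)
  qed
qed

lemma deriv_sq:
  assumes "r > 0" "s holomorphic_on ball p r" "\<And>w. w \<in> ball p r \<Longrightarrow> s w ^ 2 = h w"
  shows "deriv h p = 2 * s p * deriv s p"
proof -
  have "(s has_field_derivative deriv s p) (at p)"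
    using assms by (intro DERIV_deriv_iff_field_differentiable[THEN iffD2] holomorphic_on_imp_differentiable_at[of _ "ball p r"]) auto
  hence "((\<lambda>w. s w ^ 2) has_field_derivative 2 * s p * deriv s p) (at p)"
    using DERIV_power[of s "deriv s p" p UNIV 2] by (simp add: mult_ac)
  hence "(h has_field_derivative 2 * s p * deriv s p) (at p)"
    by (rule has_field_derivative_transform_within_open[of _ _ _ "ball p r"]) (use assms in auto)
  thus ?thesis by (simp add: DERIV_imp_deriv)
qed

lemma res_fwd:
  assumes "r > 0" "h holomorphic_on ball p r" "\<And>w. w \<in> ball p r \<Longrightarrow> h w \<noteq> 0"
    and "deriv h p = 0" and "\<And>w. w \<in> ball p r - {p} \<Longrightarrow> Q w = h w / (w - p) ^ 4"
  shows "sqrt_residue_vanishes Q p"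
proof -
  obtain s where s: "s holomorphic_on ball p r" "\<And>w. w \<in> ball p r \<Longrightarrow> s w ^ 2 = h w"
    using ball_sqrt[OF assms(2,3)] by metis
  have "deriv h p = 2 * s p * deriv s p" by (rule deriv_sq[OF assms(1) s])
  moreover have "s p \<noteq> 0" using s(2)[of p] assms(3)[of p] assms(1) by auto
  ultimately have ds: "deriv s p = 0" using assms(4) by simp
  define f where "f = (\<lambda>w. s w / (w - p) ^ Suc 1)"
  have "f holomorphic_on (ball p r - {p})"
    unfolding f_def by (intro holomorphic_intros holomorphic_on_subset[OF s(1)]) auto
  moreover have "\<forall>w\<in>ball p r - {p}. (f w)^2 = Q w"
  proof
    fix w assume w: "w \<in> ball p r - {p}"
    have e: "((w - p) ^ Suc 1) ^ 2 = (w - p) ^ 4" by (simp add: power2_eq_square power4_eq_xxxx mult_ac)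
    have "(f w)^2 = s w ^ 2 / ((w - p) ^ Suc 1) ^ 2" unfolding f_def by (rule power_divide)
    also have "\<dots> = h w / (w - p) ^ 4" unfolding e using s(2)[of w] w by simp
    finally show "(f w)^2 = Q w" using assms(5)[OF w] by simp
  qed
  moreover have "residue f p = 0"
  proof -
    have "residue f p = (deriv ^^ 1) s p / fact 1"
      unfolding f_def by (rule residue_holomorphic_over_power[OF _ _ s(1)]) (use assms(1) in auto)
    thus ?thesis using ds by simp
  qed
  ultimately show ?thesis unfolding sqrt_residue_vanishes_def using assms(1) by blast
qed

lemma res_bwd:
  assumes "r > 0" "h holomorphic_on ball p r" "\<And>w. w \<in> ball p r \<Longrightarrow> h w \<noteq> 0"
    and "f holomorphic_on ball p r - {p}" "\<And>w. w \<in> ball p r - {p} \<Longrightarrow> f w ^ 2 = h w / (w - p) ^ 4"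
    and "residue f p = 0"
  shows "deriv h p = 0"
proof -
  obtain s where s: "s holomorphic_on ball p r" "\<And>w. w \<in> ball p r \<Longrightarrow> s w ^ 2 = h w"
    using ball_sqrt[OF assms(2,3)] by metis
  have snz: "s w \<noteq> 0" if "w \<in> ball p r" for w using s(2)[of w] assms(3)[of w] that by auto
  define e where "e = (\<lambda>w. f w * (w - p)^2 / s w)"
  have e2: "e w ^ 2 = 1" if "w \<in> ball p r - {p}" for w
  proof -
    have "e w ^ 2 = f w ^ 2 * ((w - p)^2)^2 / s w ^ 2" by (simp add: e_def power_mult_distrib power_divide)
    also have "\<dots> = h w / (w - p) ^ 4 * (w - p) ^ 4 / h w"
      using that s(2)[of w] assms(5)[of w] by (simp flip: power_mult)
    also have "\<dots> = 1" using that assms(3)[of w] by auto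
    finally show ?thesis .
  qed
  have "continuous_on (ball p r - {p}) e"
    unfolding e_def using snz
    by (intro continuous_intros holomorphic_on_imp_continuous_on assms(4)
        holomorphic_on_imp_continuous_on[OF holomorphic_on_subset[OF s(1)]]) auto
  moreover have "e ` (ball p r - {p}) \<subseteq> {1, -1}"
    using e2 unfolding power2_eq_1_iff by blast
  hence "finite (e ` (ball p r - {p}))" by (rule finite_subset) auto
  ultimately have "e constant_on (ball p r - {p})"
    by (intro continuous_finite_range_constant connected_punctured_ball) auto
  then obtain \<epsilon> where eps: "\<And>w. w \<in> ball p r - {p} \<Longrightarrow> e w = \<epsilon>"
    by (auto simp: constant_on_def)
  have "p + of_real (r/2) \<in> ball p r - {p}" using assms(1) by (auto simp: dist_norm)
  hence "\<epsilon> ^ 2 = 1" using eps e2 by metis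
  hence epsnz: "\<epsilon> \<noteq> 0" by auto
  have feq: "f w = \<epsilon> * (s w / (w - p) ^ Suc 1)" if "w \<in> ball p r - {p}" for w
  proof -
    have "f w * (w - p)^2 = \<epsilon> * s w" using eps[OF that] snz[of w] that by (auto simp: e_def field_simps)
    moreover have "(w - p) ^ 2 \<noteq> 0" using that by auto
    ultimately have "f w = \<epsilon> * s w / (w - p) ^ 2" by (simp add: eq_divide_eq)
    thus ?thesis by (metis One_nat_def numeral_2_eq_2 times_divide_eq_right)
  qed
  have "eventually (\<lambda>w. w \<in> ball p r - {p}) (at p)"
    using assms(1) by (intro eventually_at_in_open) auto
  hence "eventually (\<lambda>w. f w = \<epsilon> * (s w / (w - p) ^ Suc 1)) (at p)"
    by eventually_elim (use feq in auto)
  hence "residue f p = residue (\<lambda>w. \<epsilon> * (s w / (w - p) ^ Suc 1)) p"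
    by (rule residue_cong) auto
  also have "\<dots> = \<epsilon> * residue (\<lambda>w. s w / (w - p) ^ Suc 1) p"
    by (rule residue_lmul[of "ball p r"]) (use assms(1) in \<open>auto intro!: holomorphic_intros holomorphic_on_subset[OF s(1)]\<close>)
  also have "residue (\<lambda>w. s w / (w - p) ^ Suc 1) p = (deriv ^^ 1) s p / fact 1"
    by (rule residue_holomorphic_over_power[OF _ _ s(1)]) (use assms(1) in auto)
  also have "\<dots> = deriv s p" by simp
  finally have "deriv s p = 0" using assms(6) epsnz by simp
  thus ?thesis using deriv_sq[OF assms(1) s] by simp
qed


lemma ev_not_in_finite:
  fixes S :: "complex set"
  assumes "finite S" shows "eventually (\<lambda>u. u \<notin> S) (at w)"
proof -
  have "eventually (\<lambda>u. u \<notin> S) (cosparse UNIV)"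
    by (rule eventually_not_in_cosparse, rule finite_imp_sparse) (use assms in auto)
  thus ?thesis by (rule eventually_cosparse_imp_eventually_at) auto
qed

lemma mero_iso: "f meromorphic_on UNIV \<Longrightarrow> isolated_singularity_at f z"
  by (rule meromorphic_on_isolated_singularity, rule meromorphic_on_subset) auto

lemma mero_freq_imp_ev:
  assumes "f meromorphic_on {z}" "frequently (\<lambda>w. f w \<noteq> 0) (at z)"
  shows "eventually (\<lambda>w. f w \<noteq> 0) (at z)"
proof (rule ccontr)
  assume "\<not> eventually (\<lambda>w. f w \<noteq> 0) (at z)"
  hence "frequently (\<lambda>w. f w = 0) (at z)" by (simp add: not_eventually)
  hence "eventually (\<lambda>w. f w = 0) (at z)"
    using assms(1) by (intro not_essential_frequently_0_imp_eventually_0) (auto simp: meromorphic_at_iff)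
  thus False using assms(2) by (simp add: frequently_def)
qed

lemma zorder0_local:
  assumes "f meromorphic_on {z}" "frequently (\<lambda>w. f w \<noteq> 0) (at z)" "zorder f z = 0"
  obtains h r where "r > 0" "h holomorphic_on ball z r" "h z \<noteq> 0" "\<And>w. w \<in> ball z r - {z} \<Longrightarrow> f w = h w"
proof -
  have "zor_poly f z z \<noteq> 0 \<and> (\<exists>r. r>0 \<and> zor_poly f z holomorphic_on cball z r
    \<and> (\<forall>w\<in>cball z r - {z}. f w  = zor_poly f z w * (w-z) powi (zorder f z)  \<and> zor_poly f z w \<noteq>0))"
    using assms by (intro zorder_exist) (auto simp: meromorphic_at_iff)
  then obtain r where r: "r > 0" "zor_poly f z holomorphic_on cball z r" "zor_poly f z z \<noteq> 0"
     "\<And>w. w\<in>cball z r - {z} \<Longrightarrow> f w  = zor_poly f z w * (w-z) powi (zorder f z)" by blast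
  show ?thesis
  proof (rule that[OF r(1) holomorphic_on_subset[OF r(2)] r(3)])
    fix w assume "w \<in> ball z r - {z}"
    thus "f w = zor_poly f z w" using r(4)[of w] assms(3) by auto
  qed auto
qed

lemma mero_ratio_const:
  fixes Q R :: "complex \<Rightarrow> complex"
  assumes QM: "Q meromorphic_on UNIV" and RM: "R meromorphic_on UNIV"
   and CQ: "at_infinity_chart Q meromorphic_on {0}" and CR: "at_infinity_chart R meromorphic_on {0}"
   and Qnz: "\<And>w. eventually (\<lambda>u. Q u \<noteq> 0) (at w)" and Rnz: "\<And>w. eventually (\<lambda>u. R u \<noteq> 0) (at w)"
   and CQnz: "frequently (\<lambda>u. at_infinity_chart Q u \<noteq> 0) (at 0)"
   and CRnz: "frequently (\<lambda>u. at_infinity_chart R u \<noteq> 0) (at 0)"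
   and ZO: "\<And>w. zorder Q w = zorder R w"
   and ZC: "zorder (at_infinity_chart Q) 0 = zorder (at_infinity_chart R) 0"
  shows "\<exists>L. L \<noteq> 0 \<and> (\<forall>p. eventually (\<lambda>w. Q w = L * R w) (at p))"
proof -
  define F where "F = (\<lambda>w. Q w / R w)"
  have FM: "F meromorphic_on UNIV" unfolding F_def by (intro meromorphic_intros QM RM)
  have Fev: "eventually (\<lambda>u. F u \<noteq> 0) (at w)" for w
    using Qnz[of w] Rnz[of w] by eventually_elim (auto simp: F_def)
  have Ffr: "frequently (\<lambda>u. F u \<noteq> 0) (at w)" for w
    by (rule eventually_frequently[OF trivial_limit_at Fev[of w]])
  have Fz: "zorder F w = 0" for w
  proof -
    have "zorder F w = zorder Q w - zorder R w" unfolding F_def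
      by (rule zorder_divide[OF meromorphic_on_subset[OF QM] eventually_frequently[OF trivial_limit_at Qnz[of w]]
           meromorphic_on_subset[OF RM] eventually_frequently[OF trivial_limit_at Rnz[of w]]]) auto
    thus ?thesis using ZO by simp
  qed
  have Flim: "\<exists>c. (F \<longlongrightarrow> c) (at w)" for w
  proof -
    obtain h r where hr: "r > 0" "h holomorphic_on ball w r" "h w \<noteq> 0" "\<And>u. u \<in> ball w r - {w} \<Longrightarrow> F u = h u"
      using zorder0_local[OF meromorphic_on_subset[OF FM] Ffr Fz] by blast
    have "isCont h w" using hr(1,2)
      by (meson centre_in_ball continuous_on_eq_continuous_at holomorphic_on_imp_continuous_on open_ball)
    hence "(h \<longlongrightarrow> h w) (at w)" by (simp add: isCont_def)
    moreover have "eventually (\<lambda>u. h u = F u) (at w)"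
      using eventually_at_in_open[of "ball w r" w] hr by (auto elim!: eventually_mono)
    ultimately show ?thesis by (blast intro: Lim_transform_eventually)
  qed
  define G where "G = remove_sings F"
  have Gan: "G analytic_on {w}" for w
  proof -
    obtain c where "(F \<longlongrightarrow> c) (at w)" using Flim by blast
    thus ?thesis unfolding G_def
      by (intro remove_sings_analytic_at mero_iso[OF FM]) auto
  qed
  hence "G analytic_on UNIV" by (subst analytic_on_analytic_at) blast
  hence Ghol: "G holomorphic_on UNIV" by (rule analytic_imp_holomorphic)
  define CF where "CF = (\<lambda>w. at_infinity_chart Q w / at_infinity_chart R w)"
  have CFeq: "CF w = F (1 / w)" if "w \<noteq> 0" for w
    using that by (simp add: CF_def F_def at_infinity_chart_def)
  have CQev: "eventually (\<lambda>u. at_infinity_chart Q u \<noteq> 0) (at 0)" by (rule mero_freq_imp_ev[OF CQ CQnz])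
  have CRev: "eventually (\<lambda>u. at_infinity_chart R u \<noteq> 0) (at 0)" by (rule mero_freq_imp_ev[OF CR CRnz])
  have CFfr: "frequently (\<lambda>u. CF u \<noteq> 0) (at 0)"
    using CQev CRev by (intro eventually_frequently) (auto simp: CF_def elim: eventually_elim2)
  have CFM: "CF meromorphic_on {0}" unfolding CF_def by (intro meromorphic_intros CQ CR)
  have CFz: "zorder CF 0 = 0"
  proof -
    have "zorder CF 0 = zorder (at_infinity_chart Q) 0 - zorder (at_infinity_chart R) 0" unfolding CF_def
      using CQ CR CQnz CRnz by (intro zorder_divide) auto
    thus ?thesis using ZC by simp
  qed
  obtain h0 r0 where h0: "r0 > 0" "h0 holomorphic_on ball 0 r0" "h0 0 \<noteq> 0" "\<And>u. u \<in> ball 0 r0 - {0} \<Longrightarrow> CF u = h0 u"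
    using zorder0_local[OF CFM CFfr CFz] by blast
  have h0c: "isCont h0 w" if "w \<in> ball 0 r0" for w using h0(2) that
    by (meson continuous_on_eq_continuous_at holomorphic_on_imp_continuous_on open_ball)
  have Ginv: "G (1 / w) = h0 w" if w: "w \<in> ball 0 r0 - {0}" for w
  proof -
    define u where "u = 1 / w"
    have u0: "u \<noteq> 0" using w by (auto simp: u_def)
    have "((\<lambda>v. 1 / v) \<longlongrightarrow> 1 / u) (at u)" using u0 by (intro tendsto_intros) auto
    hence "((\<lambda>v. 1 / v) \<longlongrightarrow> w) (at u)" using w by (simp add: u_def)
    hence ev: "eventually (\<lambda>v. 1 / v \<in> ball 0 r0 - {0}) (at u)"
      using w by (intro topological_tendstoD) auto
    have "((\<lambda>v. h0 (1 / v)) \<longlongrightarrow> h0 w) (at u)"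
      using \<open>((\<lambda>v. 1 / v) \<longlongrightarrow> w) (at u)\<close> h0c[of w] w by (intro isCont_tendsto_compose[of w h0]) auto
    moreover have "eventually (\<lambda>v. h0 (1 / v) = F v) (at u)"
      using ev
    proof eventually_elim
      case (elim v)
      hence "v \<noteq> 0" by auto
      have "h0 (1/v) = CF (1/v)" using h0(4)[OF elim] by simp
      also have "\<dots> = F v" using CFeq[of "1/v"] \<open>v \<noteq> 0\<close> by simp
      finally show ?case .
    qed
    ultimately have "(F \<longlongrightarrow> h0 w) (at u)" by (blast intro: Lim_transform_eventually)
    thus ?thesis unfolding G_def u_def[symmetric] by (rule remove_sings_eqI)
  qed
  have "((G \<circ> inverse) \<longlongrightarrow> h0 0) (at 0)"
  proof -
    have "(h0 \<longlongrightarrow> h0 0) (at 0)" using h0c[of 0] h0(1) by (simp add: isCont_def)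
    moreover have "eventually (\<lambda>w. h0 w = (G \<circ> inverse) w) (at 0)"
      using eventually_at_in_open[of "ball 0 r0" 0] h0(1)
      by (auto elim!: eventually_mono simp: Ginv inverse_eq_divide)
    ultimately show ?thesis by (blast intro: Lim_transform_eventually)
  qed
  hence "(G \<longlongrightarrow> h0 0) at_infinity" by (simp add: lim_at_infinity_0)
  hence "((\<lambda>u. G u - h0 0) \<longlongrightarrow> 0) at_infinity"
    using tendsto_diff[of G "h0 0" at_infinity "\<lambda>_. h0 0" "h0 0"] by simp
  moreover have "(\<lambda>u. G u - h0 0) holomorphic_on UNIV" by (intro holomorphic_intros Ghol)
  ultimately have Gc: "G u = h0 0" for u
    using Liouville_weak_0[of "\<lambda>u. G u - h0 0" u] by auto
  show ?thesis
  proof (intro exI conjI allI)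
    show "h0 0 \<noteq> 0" by fact
    fix p
    have "eventually (\<lambda>w. G w = F w) (at p)" unfolding G_def
      by (intro eventually_remove_sings_eq_at mero_iso[OF FM])
    thus "eventually (\<lambda>w. Q w = h0 0 * R w) (at p)"
      using Rnz[of p] by eventually_elim (auto simp: Gc F_def field_simps)
  qed
qed


definition good :: "nat \<Rightarrow> nat \<Rightarrow> (nat \<Rightarrow> complex) \<Rightarrow> (nat \<Rightarrow> complex) \<Rightarrow> bool" where
  "good m n z xi \<longleftrightarrow> (\<forall>j<n. norm (z j) = 1) \<and> inj_on z {..<n} \<and> (\<forall>k<m. xi k \<noteq> 0) \<and>
      inj_on xi {..<m} \<and> (\<forall>k<m. \<forall>j<n. xi k \<noteq> z j)"

definition Sset :: "nat \<Rightarrow> nat \<Rightarrow> (nat \<Rightarrow> complex) \<Rightarrow> (nat \<Rightarrow> complex) \<Rightarrow> complex set" where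
  "Sset m n z xi = insert 0 (z ` {..<n} \<union> xi ` {..<m})"

definition ordf :: "nat \<Rightarrow> nat \<Rightarrow> (nat \<Rightarrow> complex) \<Rightarrow> complex \<Rightarrow> int" where
  "ordf m n z p = (if p = 0 then -(int n + 2 - 2 * int m) else if p \<in> z ` {..<n} then 2 else -4)"

definition relexpr :: "nat \<Rightarrow> nat \<Rightarrow> (nat \<Rightarrow> complex) \<Rightarrow> (nat \<Rightarrow> complex) \<Rightarrow> nat \<Rightarrow> complex" where
  "relexpr m n z xi k = - (\<Sum>j<n. 2 / (xi k - z j))
                  + (\<Sum>l\<in>{..<m} - {k}. 4 / (xi k - xi l))
                  + of_int (int n - 2 * int m + 2) / xi k"

lemma good_facts:
  assumes "good m n z xi"
  shows "finite (Sset m n z xi)" "0 \<notin> z ` {..<n}" "0 \<notin> xi ` {..<m}"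
    "z ` {..<n} \<inter> xi ` {..<m} = {}"
proof -
  show "finite (Sset m n z xi)" by (simp add: Sset_def)
  show "0 \<notin> z ` {..<n}" using assms by (force simp: good_def)
  show "0 \<notin> xi ` {..<m}" using assms by (force simp: good_def)
  show "z ` {..<n} \<inter> xi ` {..<m} = {}"
  proof (rule equals0I)
    fix x assume "x \<in> z ` {..<n} \<inter> xi ` {..<m}"
    then obtain j k where "j < n" "k < m" "x = z j" "x = xi k" by blast
    thus False using assms by (auto simp: good_def)
  qed
qed

lemma C2:
  assumes "good m n z xi"
  shows "zorder (ratf (Sset m n z xi) (ordf m n z)) w =
    (if w = 0 then -(int n + 2 - 2 * int m) else if w \<in> z ` {..<n} then 2 else if w \<in> xi ` {..<m} then -4 else 0)"
  using good_facts[OF assms] by (subst ratf_zorder) (auto simp: Sset_def ordf_def)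

lemma C3:
  assumes "good m n z xi"
  shows "(\<Sum>p\<in>Sset m n z xi. ordf m n z p) = -(int n + 2 - 2 * int m) + 2 * int n - 4 * int m"
proof -
  note gf = good_facts[OF assms]
  have injz: "inj_on z {..<n}" and injx: "inj_on xi {..<m}" using assms by (auto simp: good_def)
  have "(\<Sum>p\<in>Sset m n z xi. ordf m n z p) = ordf m n z 0 + (\<Sum>p\<in>z ` {..<n} \<union> xi ` {..<m}. ordf m n z p)"
    unfolding Sset_def using gf by (subst sum.insert) auto
  also have "(\<Sum>p\<in>z ` {..<n} \<union> xi ` {..<m}. ordf m n z p) = (\<Sum>p\<in>z ` {..<n}. ordf m n z p) + (\<Sum>p\<in>xi ` {..<m}. ordf m n z p)"
    using gf by (intro sum.union_disjoint) auto
  also have "(\<Sum>p\<in>z ` {..<n}. ordf m n z p) = (\<Sum>p\<in>z ` {..<n}. 2)"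
    using gf by (intro sum.cong) (auto simp: ordf_def)
  also have "\<dots> = 2 * int n" using card_image[OF injz] by simp
  also have "(\<Sum>p\<in>xi ` {..<m}. ordf m n z p) = (\<Sum>p\<in>xi ` {..<m}. -4)"
    using gf by (intro sum.cong) (auto simp: ordf_def)
  also have "\<dots> = - 4 * int m" using card_image[OF injx] by simp
  finally show ?thesis by (simp add: ordf_def)
qed

lemma C4:
  assumes "good m n z xi"
  shows "zorder (at_infinity_chart (ratf (Sset m n z xi) (ordf m n z))) 0 = -(int n + 2 - 2 * int m)"
  using ratf_chart_zorder[OF good_facts(1)[OF assms]] C3[OF assms] by simp

lemma C5:
  assumes "good m n z xi" "k < m"
  shows "(\<Sum>q\<in>Sset m n z xi - {xi k}. of_int (ordf m n z q) / (xi k - q)) = - relexpr m n z xi k"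
proof -
  note gf = good_facts[OF assms(1)]
  define p where "p = xi k"
  have injz: "inj_on z {..<n}" and injx: "inj_on xi {..<m}" using assms by (auto simp: good_def)
  have p0: "p \<noteq> 0" "p \<notin> z ` {..<n}" using gf assms(2) by (auto simp: p_def)
  have Seq: "Sset m n z xi - {p} = insert 0 (z ` {..<n} \<union> (xi ` {..<m} - {p}))"
    using p0 by (auto simp: Sset_def)
  have Xeq: "xi ` {..<m} - {p} = xi ` ({..<m} - {k})"
    unfolding p_def using injx assms(2) by (subst inj_on_image_set_diff[OF injx]) auto
  have "(\<Sum>q\<in>Sset m n z xi - {p}. of_int (ordf m n z q) / (p - q)) =
     of_int (ordf m n z 0) / p + ((\<Sum>q\<in>z ` {..<n}. of_int (ordf m n z q) / (p - q)) + (\<Sum>q\<in>xi ` {..<m} - {p}. of_int (ordf m n z q) / (p - q)))"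
  proof -
    have "(\<Sum>q\<in>insert 0 (z ` {..<n} \<union> (xi ` {..<m} - {p})). of_int (ordf m n z q) / (p - q)) =
      of_int (ordf m n z 0) / (p - 0) + (\<Sum>q\<in>z ` {..<n} \<union> (xi ` {..<m} - {p}). of_int (ordf m n z q) / (p - q))"
      by (rule sum.insert) (use gf in auto)
    moreover have "(\<Sum>q\<in>z ` {..<n} \<union> (xi ` {..<m} - {p}). of_int (ordf m n z q) / (p - q)) =
      (\<Sum>q\<in>z ` {..<n}. of_int (ordf m n z q) / (p - q)) + (\<Sum>q\<in>xi ` {..<m} - {p}. of_int (ordf m n z q) / (p - q))"
      by (rule sum.union_disjoint) (use gf in auto)
    ultimately show ?thesis unfolding Seq by simp
  qed
  also have "(\<Sum>q\<in>z ` {..<n}. of_int (ordf m n z q) / (p - q)) = (\<Sum>q\<in>z ` {..<n}. 2 / (p - q))"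
    by (intro sum.cong refl) (use gf in \<open>auto simp: ordf_def\<close>)
  also have "\<dots> = (\<Sum>j<n. 2 / (p - z j))" by (subst sum.reindex[OF injz]) auto
  also have "(\<Sum>q\<in>xi ` {..<m} - {p}. of_int (ordf m n z q) / (p - q)) = (\<Sum>q\<in>xi ` {..<m} - {p}. -4 / (p - q))"
    using gf by (intro sum.cong) (auto simp: ordf_def)
  also have "\<dots> = (\<Sum>l\<in>{..<m} - {k}. -4 / (p - xi l))"
    unfolding Xeq by (subst sum.reindex[OF inj_on_subset[OF injx]]) auto
  finally have eq: "(\<Sum>q\<in>Sset m n z xi - {p}. of_int (ordf m n z q) / (p - q)) =
     of_int (ordf m n z 0) / p + ((\<Sum>j<n. 2 / (p - z j)) + (\<Sum>l\<in>{..<m} - {k}. -4 / (p - xi l)))" .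
  have o0: "of_int (ordf m n z 0) / p = - (complex_of_int (int n - 2 * int m + 2) / p)"
  proof -
    have "ordf m n z 0 = - (int n - 2 * int m + 2)" by (simp add: ordf_def)
    hence "complex_of_int (ordf m n z 0) = - complex_of_int (int n - 2 * int m + 2)" by simp
    thus ?thesis by (simp only: minus_divide_left)
  qed
  have s4: "(\<Sum>l\<in>{..<m} - {k}. -4 / (p - xi l)) = - (\<Sum>l\<in>{..<m} - {k}. 4 / (p - xi l))"
    by (simp add: sum_negf[symmetric])
  show ?thesis unfolding p_def[symmetric] eq o0 s4 relexpr_def by (simp add: algebra_simps)
qed


lemma inv_inv [simp]: "1 / cnj (1 / cnj (p::complex)) = p"
  by simp

lemma ratf_sym:
  fixes S :: "complex set"
  assumes fin: "finite S" and S0: "0 \<in> S" and inv: "\<And>p. p \<in> S \<Longrightarrow> 1 / cnj p \<in> S"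
    and ordinv: "\<And>p. p \<in> S \<Longrightarrow> ord (1 / cnj p) = ord p"
    and sumc: "(\<Sum>p\<in>S. ord p) + ord 0 = -4"
  shows "\<exists>K. \<forall>w. w \<notin> S \<longrightarrow> cnj (ratf S ord (1 / cnj w)) = K * ratf S ord w * w ^ 4"
proof (intro exI allI impI)
  define K where "K = (\<Prod>q\<in>S-{0}. (-1/q) powi ord q)"
  fix w assume w: "w \<notin> S"
  have w0: "w \<noteq> 0" using w S0 by auto
  have "cnj (ratf S ord (1 / cnj w)) = (\<Prod>p\<in>S. (1/w - cnj p) powi ord p)"
    by (simp add: ratf_def)
  also have "\<dots> = (\<Prod>q\<in>S. (1/w - 1/q) powi ord q)"
  proof (rule prod.reindex_bij_witness[of S "\<lambda>q. 1 / cnj q" "\<lambda>q. 1 / cnj q"])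
    fix a assume a: "a \<in> S"
    show "1 / cnj (1 / cnj a) = a" by simp
    show "1 / cnj a \<in> S" using inv[OF a] .
    show "(1 / w - 1 / (1 / cnj a)) powi ord (1 / cnj a) = (1 / w - cnj a) powi ord a"
      using ordinv[OF a] by simp
  qed (use inv in auto)
  also have "\<dots> = (1/w) powi ord 0 * (\<Prod>q\<in>S-{0}. (1/w - 1/q) powi ord q)"
    using fin S0 by (subst prod.remove[of S 0]) auto
  also have "(\<Prod>q\<in>S-{0}. (1/w - 1/q) powi ord q) = (\<Prod>q\<in>S-{0}. (w - q) powi ord q * (-1/q) powi ord q * (1/w) powi ord q)"
  proof (rule prod.cong)
    fix q assume "q \<in> S - {0}"
    hence e: "1/w - 1/q = (w - q) * (-1/q) * (1/w)" using w0 by (auto simp: field_simps)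
    show "(1/w - 1/q) powi ord q = (w - q) powi ord q * (-1/q) powi ord q * (1/w) powi ord q"
      unfolding e by (simp only: power_int_mult_distrib)
  qed auto
  also have "\<dots> = ratf (S-{0}) ord w * K * (1/w) powi (\<Sum>q\<in>S-{0}. ord q)"
    using fin w0 by (simp add: prod.distrib prod_power_int ratf_def K_def)
  finally have eq1: "cnj (ratf S ord (1 / cnj w)) = ratf (S-{0}) ord w * K * ((1/w) powi ord 0 * (1/w) powi (\<Sum>q\<in>S-{0}. ord q))"
    by (simp add: mult_ac)
  have "(\<Sum>q\<in>S-{0}. ord q) = (\<Sum>q\<in>S. ord q) - ord 0"
    using fin S0 by (simp add: sum_diff1)
  hence "ord 0 + (\<Sum>q\<in>S-{0}. ord q) = -(ord 0 + 4)" using sumc by simp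
  hence ex: "ord 0 + (\<Sum>q\<in>S-{0}. ord q) = -(ord 0 + 4)" .
  have "(1/w) powi ord 0 * (1/w) powi (\<Sum>q\<in>S-{0}. ord q) = (1/w) powi (ord 0 + (\<Sum>q\<in>S-{0}. ord q))"
    by (rule power_int_add[symmetric]) (use w0 in auto)
  also have "\<dots> = (1/w) powi (-(ord 0 + 4))" unfolding ex ..
  also have "\<dots> = 1 / w powi (-(ord 0 + 4))" by (rule power_int_one_over)
  also have "\<dots> = w powi (ord 0 + 4)" using power_int_minus_divide[of w "-(ord 0 + 4)"] by (simp add: add.commute)
  also have "\<dots> = w powi ord 0 * w ^ 4"
    using w0 by (simp add: power_int_add)
  finally have eq2: "(1/w) powi ord 0 * (1/w) powi (\<Sum>q\<in>S-{0}. ord q) = w powi ord 0 * w ^ 4" .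
  have eq3: "ratf S ord w = ratf (S-{0}) ord w * w powi ord 0"
    using ratf_remove[OF fin S0, of ord w] by simp
  show "cnj (ratf S ord (1 / cnj w)) = K * ratf S ord w * w ^ 4"
    unfolding eq1 eq2 eq3 by (simp add: mult_ac)
qed

lemma ratf_sym_norm:
  fixes S :: "complex set"
  assumes fin: "finite S" and S0: "0 \<in> S" and inv: "\<And>p. p \<in> S \<Longrightarrow> 1 / cnj p \<in> S"
    and H: "\<forall>w. w \<notin> S \<longrightarrow> cnj (ratf S ord (1 / cnj w)) = K * ratf S ord w * w ^ 4"
  shows "K * cnj K = 1"
proof -
  have "infinite (UNIV :: complex set)" by (rule infinite_UNIV_char_0)
  then obtain w where w: "w \<notin> S" using fin by (metis finite_subset subsetI)
  have w0: "w \<noteq> 0" using w S0 by auto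
  define w' where "w' = 1 / cnj w"
  have w': "w' \<notin> S"
  proof
    assume "w' \<in> S" hence "1 / cnj w' \<in> S" by (rule inv)
    thus False using w by (simp add: w'_def)
  qed
  have E1: "cnj (ratf S ord w') = K * ratf S ord w * w ^ 4" using H[rule_format, OF w] by (simp add: w'_def)
  have E2: "cnj (ratf S ord (1 / cnj w')) = K * ratf S ord w' * w' ^ 4" using H[rule_format, OF w'] .
  hence E2: "cnj (ratf S ord w) = K * ratf S ord w' * w' ^ 4" by (simp add: w'_def)
  have "ratf S ord w' = cnj K * cnj (ratf S ord w) * cnj w ^ 4"
    using arg_cong[OF E1, of cnj] by simp
  with E2 have "cnj (ratf S ord w) = (K * cnj K) * cnj (ratf S ord w) * (cnj w * w') ^ 4"
    by (simp add: mult_ac power_mult_distrib)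
  moreover have "cnj w * w' = 1" using w0 by (simp add: w'_def)
  moreover have "cnj (ratf S ord w) \<noteq> 0" using ratf_nonzero[OF fin w] by simp
  ultimately show ?thesis by simp
qed

lemma cnj_fix:
  assumes "K * cnj K = 1"
  obtains c :: complex where "c \<noteq> 0" "cnj c * K = c"
proof (cases "K = -1")
  case True
  thus ?thesis by (intro that[of \<i>]) auto
next
  case False
  show ?thesis
  proof (rule that[of "1 + K"])
    show "1 + K \<noteq> 0" using False by (auto simp: add_eq_0_iff)
    show "cnj (1 + K) * K = 1 + K" using assms by (simp add: algebra_simps)
  qed
qed

lemma chart_freq:
  fixes Q :: "complex \<Rightarrow> complex"
  assumes Qev: "\<And>w. eventually (\<lambda>u. Q u \<noteq> 0) (at w)"
  shows "frequently (\<lambda>u. at_infinity_chart Q u \<noteq> 0) (at 0)"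
proof (rule ccontr)
  assume "\<not> frequently (\<lambda>u. at_infinity_chart Q u \<noteq> 0) (at 0)"
  hence "eventually (\<lambda>u. at_infinity_chart Q u = 0) (at 0)" by (simp add: not_frequently)
  then obtain d where d: "d > 0" "\<And>u. u \<noteq> 0 \<Longrightarrow> dist u 0 < d \<Longrightarrow> at_infinity_chart Q u = 0"
    unfolding eventually_at by auto
  define u0 where "u0 = complex_of_real (2 / d)"
  have "eventually (\<lambda>v. v \<in> ball u0 (1/d)) (at u0)"
    using d by (intro eventually_at_in_open') auto
  hence "eventually (\<lambda>v. Q v = 0) (at u0)"
  proof eventually_elim
    case (elim v)
    have "norm u0 = 2 / d" using d by (simp add: u0_def norm_divide)
    moreover have "norm u0 \<le> norm v + dist v u0"
      using norm_triangle_ineq4[of v "v - u0"] by (simp add: dist_norm)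
    ultimately have nv: "norm v > 1 / d" using elim by (auto simp: dist_commute)
    hence v0: "v \<noteq> 0" using d by auto
    have "norm v > 0" using v0 by simp
    hence "norm (1 / v) < d" using nv d by (simp add: norm_divide divide_less_eq mult.commute)
    hence "at_infinity_chart Q (1 / v) = 0" using d(2)[of "1/v"] v0 by auto
    thus "Q v = 0" using v0 by (simp add: at_infinity_chart_def)
  qed
  with Qev[of u0] have "eventually (\<lambda>v. False) (at u0)" by eventually_elim auto
  thus False by (simp add: eventually_False)
qed


lemma small_ball:
  fixes S :: "complex set"
  assumes "finite S" "p \<notin> S"
  obtains r where "r > 0" "ball p r \<inter> S = {}"
proof -
  have "open (- S)" using assms(1) by (intro open_Compl finite_imp_closed)
  then obtain r where "r > 0" "ball p r \<subseteq> - S" using assms(2) by (meson ComplI open_contains_ball)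
  thus ?thesis using that by blast
qed

lemma ratf_local:
  assumes "finite S" "p \<in> S" "ord p = -4"
  shows "ratf S ord w = ratf (S - {p}) ord w / (w - p) ^ 4"
  using ratf_remove[OF assms(1,2), of ord w] assms(3) by (simp add: power_int_minus_divide)

lemma ratf_deriv_remove:
  assumes "finite S"
  shows "deriv (\<lambda>w. c * ratf (S - {p}) ord w) p = c * (ratf (S - {p}) ord p * (\<Sum>q\<in>S - {p}. of_int (ord q) / (p - q)))"
proof -
  have "(ratf (S - {p}) ord has_field_derivative ratf (S - {p}) ord p * (\<Sum>q\<in>S - {p}. of_int (ord q) / (p - q))) (at p)"
    using assms by (intro ratf_deriv) auto
  hence "((\<lambda>w. c * ratf (S - {p}) ord w) has_field_derivative c * (ratf (S - {p}) ord p * (\<Sum>q\<in>S - {p}. of_int (ord q) / (p - q)))) (at p)"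
    by (rule DERIV_cmult)
  thus ?thesis by (rule DERIV_imp_deriv)
qed

lemma dir1:
  assumes G: "good m n z xi"
    and inv: "(\<lambda>w. 1 / cnj w) ` xi ` {..<m} = xi ` {..<m}"
    and rel: "\<forall>k<m. relexpr m n z xi k = 0"
  shows "\<exists>Q \<in> QD m n z. {w. w \<noteq> 0 \<and> zorder Q w < 0} = xi ` {..<m} \<and>
            {w. w \<noteq> 0 \<and> zorder Q w > 0} = z ` {..<n}"
proof -
  define S where "S = Sset m n z xi"
  define ord where "ord = ordf m n z"
  define R where "R = ratf S ord"
  note gf = good_facts[OF G, folded S_def]
  have zc: "norm (z j) = 1" if "j < n" for j using G that by (auto simp: good_def)
  have zfix: "1 / cnj p = p" if "p \<in> z ` {..<n}" for p
  proof -
    from that obtain j where j: "j < n" "p = z j" by auto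
    have "z j * cnj (z j) = 1" using complex_norm_square[of "z j"] zc[OF j(1)] by simp
    hence "p * cnj p = 1" using j(2) by (simp add: mult.commute)
    thus ?thesis by (auto simp: divide_eq_eq)
  qed
  have S0: "0 \<in> S" by (simp add: S_def Sset_def)
  have Sinv: "1 / cnj p \<in> S" if pS0: "p \<in> S" for p
  proof -
    consider "p = 0" | "p \<in> z ` {..<n}" | "p \<in> xi ` {..<m}" using pS0 unfolding S_def Sset_def by blast
    thus ?thesis
    proof cases
      case 3
      hence "1 / cnj p \<in> (\<lambda>w. 1 / cnj w) ` xi ` {..<m}" by blast
      thus ?thesis using inv by (simp add: S_def Sset_def)
    qed (use zfix S0 pS0 in auto)
  qed
  have ordinv: "ord (1 / cnj p) = ord p" if pS0: "p \<in> S" for p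
  proof -
    consider "p = 0" | "p \<in> z ` {..<n}" | "p \<in> xi ` {..<m}" using pS0 unfolding S_def Sset_def by blast
    thus ?thesis
    proof cases
      case 3
      hence p': "1 / cnj p \<in> xi ` {..<m}" using inv by blast
      have "p \<noteq> 0" "p \<notin> z ` {..<n}" "1 / cnj p \<noteq> 0" "1 / cnj p \<notin> z ` {..<n}"
        using gf 3 p' by auto
      thus ?thesis by (simp add: ord_def ordf_def)
    qed (use zfix in auto)
  qed
  have sumc: "(\<Sum>p\<in>S. ord p) + ord 0 = -4"
    using C3[OF G] by (simp add: S_def ord_def ordf_def)
  obtain K where K: "\<forall>w. w \<notin> S \<longrightarrow> cnj (ratf S ord (1 / cnj w)) = K * ratf S ord w * w ^ 4"
    using ratf_sym[OF gf(1) S0 Sinv ordinv sumc] by blast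
  have KK: "K * cnj K = 1" by (rule ratf_sym_norm[OF gf(1) S0 Sinv K])
  obtain c where c: "c \<noteq> 0" "cnj c * K = c" using cnj_fix[OF KK] by blast
  define Q where "Q = (\<lambda>w. c * R w)"
  have Rnz: "R w \<noteq> 0" if "w \<notin> S" for w unfolding R_def by (rule ratf_nonzero[OF gf(1) that])
  have evS: "eventually (\<lambda>w. w \<notin> S) (cosparse UNIV)"
    by (rule eventually_not_in_cosparse, rule finite_imp_sparse) (use gf in auto)
  have ZR: "zorder Q w = zorder R w" for w unfolding Q_def by (rule zorder_cmult[OF c(1)])
  have ZR2: "zorder Q w = (if w = 0 then -(int n + 2 - 2 * int m) else if w \<in> z ` {..<n} then 2 else if w \<in> xi ` {..<m} then -4 else 0)" for w
    unfolding ZR R_def S_def ord_def by (rule C2[OF G])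
  have chartQ: "at_infinity_chart Q = (\<lambda>w. c * at_infinity_chart R w)"
    by (auto simp: at_infinity_chart_def Q_def)
  have QDw: "QD_with m n z xi Q"
    unfolding QD_with_def
  proof (intro conjI allI impI)
    show "Q meromorphic_on UNIV" unfolding Q_def R_def by (intro meromorphic_intros ratf_mero)
    show "at_infinity_chart Q meromorphic_on {0}"
      unfolding at_infinity_chart_def Q_def R_def ratf_def by (intro meromorphic_intros)
    show "\<not> (\<forall>\<^sub>\<approx>w\<in>UNIV. Q w = 0)"
    proof
      assume "\<forall>\<^sub>\<approx>w\<in>UNIV. Q w = 0"
      with evS have "eventually (\<lambda>w. False) (cosparse (UNIV :: complex set))"
        by eventually_elim (use Rnz c in \<open>auto simp: Q_def\<close>)
      thus False by simp
    qed
    show "\<forall>\<^sub>\<approx>w\<in>UNIV. Q w = cnj (Q (1 / cnj w)) / w ^ 4"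
      using evS
    proof eventually_elim
      case (elim w)
      have w0: "w \<noteq> 0" using elim S0 by auto
      have "cnj (Q (1 / cnj w)) / w ^ 4 = cnj c * (K * R w * w ^ 4) / w ^ 4"
        using K elim by (simp add: Q_def R_def)
      also have "\<dots> = c * R w" using c(2) w0 by (simp add: field_simps)
      finally show ?case by (simp add: Q_def)
    qed
    fix j assume jn: "j < n"
    have "z j \<noteq> 0" using gf(2) jn by (metis imageI lessThan_iff)
    thus "zorder Q (z j) = 2" using jn by (simp add: ZR2)
  next
    fix k assume k: "k < m"
    define p where "p = xi k"
    have pX: "p \<in> xi ` {..<m}" using k by (simp add: p_def)
    have p0: "p \<noteq> 0" "p \<notin> z ` {..<n}" using gf pX by auto
    show "xi k \<noteq> 0" using p0 by (simp add: p_def)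
    show "zorder Q (xi k) = -4" using p0 pX by (simp add: ZR2 p_def)
    have pS: "p \<in> S" using pX by (simp add: S_def Sset_def)
    have ordp: "ord p = -4" using p0 by (simp add: ord_def ordf_def)
    obtain r where r: "r > 0" "ball p r \<inter> (S - {p}) = {}"
      using small_ball[of "S - {p}" p] gf by auto
    show "sqrt_residue_vanishes Q (xi k)" unfolding p_def[symmetric]
    proof (rule res_fwd[OF r(1)])
      show "(\<lambda>w. c * ratf (S - {p}) ord w) holomorphic_on ball p r"
        using r gf by (intro holomorphic_intros ratf_holo) auto
      show "c * ratf (S - {p}) ord w \<noteq> 0" if "w \<in> ball p r" for w
        using r gf that c by (intro no_zero_divisors ratf_nonzero) auto
      have "deriv (\<lambda>w. c * ratf (S - {p}) ord w) p = c * (ratf (S - {p}) ord p * (\<Sum>q\<in>S - {p}. of_int (ord q) / (p - q)))"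
        by (rule ratf_deriv_remove[OF gf(1)])
      also have "(\<Sum>q\<in>S - {p}. of_int (ord q) / (p - q)) = - relexpr m n z xi k"
        unfolding S_def ord_def p_def by (rule C5[OF G k])
      finally show "deriv (\<lambda>w. c * ratf (S - {p}) ord w) p = 0" using rel k by simp
      fix w assume "w \<in> ball p r - {p}"
      show "Q w = c * ratf (S - {p}) ord w / (w - p) ^ 4"
        unfolding Q_def R_def using ratf_local[of S p ord w, OF gf(1) pS ordp] by simp
    qed
  next
    show "zorder Q 0 = - (int n + 2 - 2 * int m)" by (simp add: ZR2)
    show "zorder (at_infinity_chart Q) 0 = - (int n + 2 - 2 * int m)"
      unfolding chartQ zorder_cmult[OF c(1)] R_def S_def ord_def by (rule C4[OF G])
    fix w assume "w \<noteq> 0 \<and> w \<notin> z ` {..<n} \<and> w \<notin> xi ` {..<m}"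
    thus "zorder Q w = 0" by (simp add: ZR2)
  qed
  have "Q \<in> QD m n z" unfolding QD_def using QDw G by (auto simp: good_def)
  moreover have "{w. w \<noteq> 0 \<and> zorder Q w < 0} = xi ` {..<m}"
    using gf by (auto simp: ZR2)
  moreover have "{w. w \<noteq> 0 \<and> zorder Q w > 0} = z ` {..<n}"
    using gf by (auto simp: ZR2)
  ultimately show ?thesis by blast
qed


lemma dir2:
  assumes G: "good m n z xi"
    and QQ: "Q \<in> QD m n z"
    and poles: "{w. w \<noteq> 0 \<and> zorder Q w < 0} = xi ` {..<m}"
  shows "(\<lambda>w. 1 / cnj w) ` xi ` {..<m} = xi ` {..<m} \<and> (\<forall>k<m. relexpr m n z xi k = 0)"
proof -
  obtain xi' where inj': "inj_on xi' {..<m}" and QW: "QD_with m n z xi' Q"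
    using QQ by (auto simp: QD_def)
  have QM: "Q meromorphic_on UNIV" and CQM: "at_infinity_chart Q meromorphic_on {0}"
    and NZ: "\<not> (\<forall>\<^sub>\<approx>w\<in>UNIV. Q w = 0)"
    and SYM: "\<forall>\<^sub>\<approx>w\<in>UNIV. Q w = cnj (Q (1 / cnj w)) / w ^ 4"
    and Zz: "\<And>j. j < n \<Longrightarrow> zorder Q (z j) = 2"
    and Zx: "\<And>k. k < m \<Longrightarrow> xi' k \<noteq> 0 \<and> zorder Q (xi' k) = -4 \<and> sqrt_residue_vanishes Q (xi' k)"
    and Z0: "zorder Q 0 = - (int n + 2 - 2 * int m)"
    and ZC: "zorder (at_infinity_chart Q) 0 = - (int n + 2 - 2 * int m)"
    and Zo: "\<And>w. w \<noteq> 0 \<Longrightarrow> w \<notin> z ` {..<n} \<Longrightarrow> w \<notin> xi' ` {..<m} \<Longrightarrow> zorder Q w = 0"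
    using QW unfolding QD_with_def by blast+
  note gf = good_facts[OF G]
  have X'eq: "xi' ` {..<m} = xi ` {..<m}"
  proof -
    have "{w. w \<noteq> 0 \<and> zorder Q w < 0} = xi' ` {..<m}"
    proof (intro equalityI subsetI)
      fix w assume "w \<in> {w. w \<noteq> 0 \<and> zorder Q w < 0}"
      hence w: "w \<noteq> 0" "zorder Q w < 0" by auto
      show "w \<in> xi' ` {..<m}"
      proof (rule ccontr)
        assume nx: "w \<notin> xi' ` {..<m}"
        show False
        proof (cases "w \<in> z ` {..<n}")
          case True thus False using Zz w by auto
        next
          case False thus False using Zo[OF w(1) False nx] w by simp
        qed
      qed
    next
      fix w assume "w \<in> xi' ` {..<m}"
      thus "w \<in> {w. w \<noteq> 0 \<and> zorder Q w < 0}" using Zx by auto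
    qed
    thus ?thesis using poles by simp
  qed
  have Qev: "eventually (\<lambda>u. Q u \<noteq> 0) (at w)" for w
  proof -
    have "eventually (\<lambda>z. Q z = 0) (cosparse UNIV) \<or> eventually (\<lambda>z. Q z \<noteq> 0) (cosparse UNIV)"
      by (rule meromorphic_imp_constant_or_avoid[OF QM]) auto
    hence "eventually (\<lambda>z. Q z \<noteq> 0) (cosparse UNIV)" using NZ by blast
    thus ?thesis by (rule eventually_cosparse_imp_eventually_at) auto
  qed
  have polechar: "w \<in> xi ` {..<m} \<longleftrightarrow> is_pole Q w" if w0: "w \<noteq> 0" for w
  proof
    assume "w \<in> xi ` {..<m}"
    hence "zorder Q w < 0" using poles by blast
    thus "is_pole Q w" by (intro zorder_neg_imp_is_pole[OF meromorphic_on_subset[OF QM] Qev]) auto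
  next
    assume "is_pole Q w"
    hence "zorder Q w < 0"
      by (intro isolated_pole_imp_neg_zorder mero_iso[OF QM]) auto
    thus "w \<in> xi ` {..<m}" using poles w0 by blast
  qed
  have invX: "1 / cnj p \<in> xi ` {..<m}" if pX: "p \<in> xi ` {..<m}" for p
  proof -
    have p0: "p \<noteq> 0" using pX gf by auto
    define p' where "p' = 1 / cnj p"
    have p'0: "p' \<noteq> 0" using p0 by (simp add: p'_def)
    have pole: "is_pole Q p" using polechar[OF p0] pX by blast
    have T1: "filterlim (\<lambda>w. 1 / cnj w) (at p) (at p')"
    proof (rule filterlim_atI)
      have "((\<lambda>w. 1 / cnj w) \<longlongrightarrow> 1 / cnj p') (at p')" using p'0 by (intro tendsto_intros) auto
      thus "((\<lambda>w. 1 / cnj w) \<longlongrightarrow> p) (at p')" by (simp add: p'_def)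
      show "eventually (\<lambda>w. 1 / cnj w \<noteq> p) (at p')"
        using eventually_neq_at_within[of p' p' UNIV]
      proof (elim eventually_mono)
        fix w assume "w \<noteq> p'"
        show "1 / cnj w \<noteq> p"
        proof
          assume "1 / cnj w = p"
          hence "1 / cnj (1 / cnj w) = p'" by (simp add: p'_def)
          thus False using \<open>w \<noteq> p'\<close> by simp
        qed
      qed
    qed
    have T2: "filterlim (\<lambda>w. Q (1 / cnj w)) at_infinity (at p')"
      using filterlim_compose[OF pole[unfolded is_pole_def] T1] by simp
    have T3: "filterlim (\<lambda>w. cnj (Q (1 / cnj w))) at_infinity (at p')"
      using T2 by (simp add: filterlim_at_infinity_conv_norm_at_top)
    have "((\<lambda>w. 1 / w ^ 4) \<longlongrightarrow> 1 / p' ^ 4) (at p')" using p'0 by (intro tendsto_intros) auto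
    hence T4: "filterlim (\<lambda>w. 1 / w ^ 4 * cnj (Q (1 / cnj w))) at_infinity (at p')"
      by (rule tendsto_mult_filterlim_at_infinity[OF _ _ T3]) (use p'0 in auto)
    have "(\<lambda>w. 1 / w ^ 4 * cnj (Q (1 / cnj w))) = (\<lambda>w. cnj (Q (1 / cnj w)) / w ^ 4)"
      by (auto simp: fun_eq_iff)
    with T4 have "is_pole (\<lambda>w. cnj (Q (1 / cnj w)) / w ^ 4) p'" by (simp add: is_pole_def)
    moreover have "eventually (\<lambda>w. cnj (Q (1 / cnj w)) / w ^ 4 = Q w) (at p')"
      using eventually_cosparse_imp_eventually_at[OF SYM, of p' UNIV] by (auto elim: eventually_mono)
    ultimately have "is_pole Q p'" by (rule is_pole_transform) auto
    thus ?thesis using polechar[OF p'0] by (simp add: p'_def)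
  qed
  have INV: "(\<lambda>w. 1 / cnj w) ` xi ` {..<m} = xi ` {..<m}"
  proof (intro equalityI subsetI)
    fix x assume "x \<in> (\<lambda>w. 1 / cnj w) ` xi ` {..<m}"
    then obtain p where "p \<in> xi ` {..<m}" "x = 1 / cnj p" by blast
    thus "x \<in> xi ` {..<m}" using invX by blast
  next
    fix x assume x: "x \<in> xi ` {..<m}"
    have "x = 1 / cnj (1 / cnj x)" by simp
    moreover have "1 / cnj x \<in> xi ` {..<m}" using invX[OF x] .
    ultimately show "x \<in> (\<lambda>w. 1 / cnj w) ` xi ` {..<m}" by blast
  qed
  define S where "S = Sset m n z xi"
  define ord where "ord = ordf m n z"
  define R where "R = ratf S ord"
  have ZR: "zorder R w = (if w = 0 then -(int n + 2 - 2 * int m) else if w \<in> z ` {..<n} then 2 else if w \<in> xi ` {..<m} then -4 else 0)" for w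
    unfolding R_def S_def ord_def by (rule C2[OF G])
  have ZO: "zorder Q w = zorder R w" for w
  proof -
    consider "w = 0" | "w \<noteq> 0" "w \<in> z ` {..<n}" | "w \<noteq> 0" "w \<notin> z ` {..<n}" "w \<in> xi ` {..<m}"
      | "w \<noteq> 0" "w \<notin> z ` {..<n}" "w \<notin> xi ` {..<m}" by blast
    thus ?thesis
    proof cases
      case 1 thus ?thesis using Z0 ZR by simp
    next
      case 2 thus ?thesis using Zz ZR by auto
    next
      case 3 thus ?thesis using Zx ZR X'eq[symmetric] by auto
    next
      case 4 thus ?thesis using Zo[of w] ZR X'eq by auto
    qed
  qed
  have Rnz: "eventually (\<lambda>u. R u \<noteq> 0) (at w)" for w
    using ev_not_in_finite[OF gf(1)[folded S_def], of w]
  proof (rule eventually_mono)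
    fix u assume "u \<notin> S" thus "R u \<noteq> 0" unfolding R_def by (rule ratf_nonzero[OF gf(1)[folded S_def]])
  qed
  obtain L where L: "L \<noteq> 0" "\<And>p. eventually (\<lambda>w. Q w = L * R w) (at p)"
  proof -
    have "\<exists>L. L \<noteq> 0 \<and> (\<forall>p. eventually (\<lambda>w. Q w = L * R w) (at p))"
    proof (rule mero_ratio_const[OF QM _ CQM _ Qev Rnz chart_freq[OF Qev] chart_freq[OF Rnz] ZO])
      show "R meromorphic_on UNIV" unfolding R_def by (rule ratf_mero)
      show "at_infinity_chart R meromorphic_on {0}"
        unfolding R_def at_infinity_chart_def ratf_def by (intro meromorphic_intros)
      show "zorder (at_infinity_chart Q) 0 = zorder (at_infinity_chart R) 0"
        unfolding ZC R_def S_def ord_def C4[OF G] ..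
    qed
    thus ?thesis using that by blast
  qed
  have REL: "relexpr m n z xi k = 0" if k: "k < m" for k
  proof -
    define p where "p = xi k"
    have pX: "p \<in> xi ` {..<m}" using k by (simp add: p_def)
    have p0: "p \<noteq> 0" "p \<notin> z ` {..<n}" using gf pX by auto
    have pS: "p \<in> S" using pX by (simp add: S_def Sset_def)
    have ordp: "ord p = -4" using p0 by (simp add: ord_def ordf_def)
    obtain k' where k': "k' < m" "xi' k' = p" using pX X'eq by (metis imageE lessThan_iff)
    have "sqrt_residue_vanishes Q p" using Zx[OF k'(1)] k'(2) by simp
    then obtain f r where fr: "r > 0" "f holomorphic_on (ball p r - {p})"
      "\<forall>w \<in> ball p r - {p}. (f w)^2 = Q w" "residue f p = 0"
      unfolding sqrt_residue_vanishes_def by blast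
    obtain r1 where r1: "r1 > 0" "\<And>w. w \<noteq> p \<Longrightarrow> dist w p < r1 \<Longrightarrow> Q w = L * R w"
      using L(2)[of p] unfolding eventually_at by auto
    obtain r2 where r2: "r2 > 0" "ball p r2 \<inter> (S - {p}) = {}"
      using small_ball[of "S - {p}" p] gf(1) by (auto simp: S_def)
    define r' where "r' = min r (min r1 r2)"
    have r'0: "r' > 0" using fr(1) r1(1) r2(1) by (simp add: r'_def)
    have "deriv (\<lambda>w. L * ratf (S - {p}) ord w) p = 0"
    proof (rule res_bwd[OF r'0 _ _ _ _ fr(4)])
      show "(\<lambda>w. L * ratf (S - {p}) ord w) holomorphic_on ball p r'"
        using r2 gf(1) by (intro holomorphic_intros ratf_holo) (auto simp: S_def r'_def)
      show "L * ratf (S - {p}) ord w \<noteq> 0" if "w \<in> ball p r'" for w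
        using r2 gf(1) that L(1) by (intro no_zero_divisors ratf_nonzero) (auto simp: S_def r'_def)
      show "f holomorphic_on ball p r' - {p}"
        by (rule holomorphic_on_subset[OF fr(2)]) (auto simp: r'_def)
      fix w assume w: "w \<in> ball p r' - {p}"
      have "(f w)^2 = Q w" using fr(3) w by (auto simp: r'_def)
      also have "Q w = L * R w" using r1(2)[of w] w by (auto simp: r'_def dist_commute)
      also have "R w = ratf (S - {p}) ord w / (w - p) ^ 4"
        unfolding R_def by (rule ratf_local[of S p ord w, OF gf(1)[folded S_def] pS ordp])
      finally show "(f w)^2 = L * ratf (S - {p}) ord w / (w - p) ^ 4" by simp
    qed
    hence "L * (ratf (S - {p}) ord p * (\<Sum>q\<in>S - {p}. of_int (ord q) / (p - q))) = 0"
      using ratf_deriv_remove[OF gf(1)[folded S_def], of L p ord] by simp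
    moreover have "ratf (S - {p}) ord p \<noteq> 0" using gf(1) by (intro ratf_nonzero) (auto simp: S_def)
    ultimately have "(\<Sum>q\<in>S - {p}. of_int (ord q) / (p - q)) = 0" using L(1) by simp
    moreover have "(\<Sum>q\<in>S - {p}. of_int (ord q) / (p - q)) = - relexpr m n z xi k"
      unfolding S_def ord_def p_def by (rule C5[OF G k])
    ultimately show ?thesis by simp
  qed
  show ?thesis using INV REL by blast
qed


theorem mainTheorem4:
  fixes m n :: nat and z xi :: "nat \<Rightarrow> complex"
  assumes z_circle: "\<forall>j<n. norm (z j) = 1"
    and z_inj: "inj_on z {..<n}"
    and xi_nonzero: "\<forall>k<m. xi k \<noteq> 0"
    and xi_inj: "inj_on xi {..<m}"
    and xi_not_z: "\<forall>k<m. \<forall>j<n. xi k \<noteq> z j"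
  shows "((\<lambda>w. 1 / cnj w) ` xi ` {..<m} = xi ` {..<m} \<and>
          (\<forall>k<m. - (\<Sum>j<n. 2 / (xi k - z j))
                  + (\<Sum>l\<in>{..<m} - {k}. 4 / (xi k - xi l))
                  + of_int (int n - 2 * int m + 2) / xi k = 0))
     \<longleftrightarrow>
         (\<exists>Q \<in> QD m n z.
            {w. w \<noteq> 0 \<and> zorder Q w < 0} = xi ` {..<m} \<and>
            {w. w \<noteq> 0 \<and> zorder Q w > 0} = z ` {..<n})"
proof -
  have G: "good m n z xi" using z_circle z_inj xi_nonzero xi_inj xi_not_z by (simp add: good_def)
  have eq: "(\<forall>k<m. - (\<Sum>j<n. 2 / (xi k - z j))
                  + (\<Sum>l\<in>{..<m} - {k}. 4 / (xi k - xi l))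
                  + of_int (int n - 2 * int m + 2) / xi k = 0) \<longleftrightarrow> (\<forall>k<m. relexpr m n z xi k = 0)"
    by (simp add: relexpr_def)
  show ?thesis unfolding eq
  proof
    assume H: "(\<lambda>w. 1 / cnj w) ` xi ` {..<m} = xi ` {..<m} \<and> (\<forall>k<m. relexpr m n z xi k = 0)"
    show "\<exists>Q \<in> QD m n z. {w. w \<noteq> 0 \<and> zorder Q w < 0} = xi ` {..<m} \<and>
            {w. w \<noteq> 0 \<and> zorder Q w > 0} = z ` {..<n}"
      by (rule dir1[OF G conjunct1[OF H] conjunct2[OF H]])
  next
    assume "\<exists>Q \<in> QD m n z. {w. w \<noteq> 0 \<and> zorder Q w < 0} = xi ` {..<m} \<and>
            {w. w \<noteq> 0 \<and> zorder Q w > 0} = z ` {..<n}"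
    then obtain Q where Q: "Q \<in> QD m n z"
      and QP: "{w. w \<noteq> 0 \<and> zorder Q w < 0} = xi ` {..<m} \<and> {w. w \<noteq> 0 \<and> zorder Q w > 0} = z ` {..<n}"
      by (rule bexE)
    show "(\<lambda>w. 1 / cnj w) ` xi ` {..<m} = xi ` {..<m} \<and> (\<forall>k<m. relexpr m n z xi k = 0)"
      by (rule dir2[OF G Q conjunct1[OF QP]])
  qed
qed

end
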